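(* Let $\mathcal{T}$ be a tangle of order $k$ in a connectivity system $(E,\lambda)$, and let $\mathcal{S}$ be a tree compatible set. Let $\Phi=(P_1,\ldots, P_n)$ be a $k$-flower in $\mathcal{T}$ of $\mathcal{S}$-order at least two with no $\mathcal{T}$-loose petals. If $X\subseteq E-P_1$ is a non-empty $\mathcal{T}$-weak set such that $P_1\cup X$ is $k$-separating, then: (i) $\Phi '=(P_1\cup X, P_2-X,\ldots, P_n-X)$ is a $k$-flower in $\mathcal{T}$ that is $\mathcal{T}$-equivalent to $\Phi$ with respect to $\mathcal{S}$; (ii) $\mathrm{fcl}_{\mathcal{T}}(P_1)=\mathrm{fcl}_{\mathcal{T}}(P_1\cup X)$ and $\mathrm{fcl}_{\mathcal{T}}(P_i-X)=\mathrm{fcl}_{\mathcal{T}}(P_i)$ for all $i\in \{2,\dots,n\}$.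
   Context: A connectivity system is a pair $(E,\lambda)$ with $E$ finite and $\lambda$ an integer-valued symmetric submodular function on subsets of $E$. $X$ is $k$-separating if $\lambda(X)\le k$; a $k$-separation is an unordered partition $(X,E-X)$ with $\lambda(X)\le k$. A tangle of order $k$ is a collection $\mathcal T$ of subsets of $E$ with (T1) $\lambda(A)<k$ for $A\in\mathcal T$; (T2) if $\lambda(A)\le k-1$ then $A$ or $E-A$ is in $\mathcal T$; (T3) $A\cup B\cup C\ne E$ for $A,B,C\in\mathcal T$; (T4) $E-\{e\}\notin\mathcal T$. A set is $\mathcal T$-weak if contained in a member of $\mathcal T$, otherwise $\mathcal T$-strong; partitions/$k$-separations are $\mathcal T$-strong if all parts are. A $\mathcal T$-strong $k$-separating $X$ is fully closed if $X\cup Y$ is not $k$-separating for every nonempty $\mathcal T$-weak $Y\subseteq E-X$; $\mathrm{fcl}_{\mathcal T}(X)$ is the intersection of all fully closed $k$-separating sets containing $X$. $\mathcal T$-strong $k$-separations $(X,Y),(X',Y')$ are $\mathcal T$-equivalent if $\{\mathrm{fcl}_{\mathcal T}(X),\mathrm{fcl}_{\mathcal T}(Y)\}=\{\mathrm{fcl}_{\mathcal T}(X'),\mathrm{fcl}_{\mathcal T}(Y')\}$. $X$ is $\mathcal T$-sequential if it is $k$-separating, $E-X$ is $\mathcal T$-strong and $\mathrm{fcl}_{\mathcal T}(E-X)=E$. Let $\mathcal S$ be a set of non-$\mathcal T$-sequential $k$-separating sets with $\mathcal T$-strong complements; a $(k,\mathcal S)$-separation is a $k$-separation $(X,E-X)$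 with $X,E-X\in\mathcal S$. $\mathcal S$ is tree compatible if (S1) any $\mathcal T$-strong $k$-separation $\mathcal T$-equivalent to a $(k,\mathcal S)$-separation is a $(k,\mathcal S)$-separation, and (S2) if $X\in\mathcal S$ and $(Y,E-Y)$ is a $\mathcal T$-strong $k$-separation with $X\subseteq Y$ then $Y\in\mathcal S$. A $k$-flower in $\mathcal T$ is a $\mathcal T$-strong partition $(P_1,\dots,P_n)$ of $E$ with $P_i$ and $P_i\cup P_{i+1}$ $k$-separating for all $i$ (mod $n$); it displays $(X,E-X)$ if $X$ is a union of petals. $\Phi_1\preccurlyeq_{\mathcal S}\Phi_2$ if each $(k,\mathcal S)$-separation displayed by $\Phi_1$ is $\mathcal T$-equivalent to one displayed by $\Phi_2$; $\mathcal T$-equivalence with respect to $\mathcal S$ means both directions hold. The $\mathcal S$-order of $\Phi$ is the minimum number of petals of a $k$-flower equivalent to $\Phi$. A $k$-flower is a $k$-anemone if every nonempty union of petals is $k$-separating. For $n\ge2$, a petal $P_i$ is $\mathcal T$-loose if $P_i\subseteq\mathrm{fcl}_{\mathcal T}(P_j)$ for some petal $P_j\ne P_i$ that is consecutive to $P_i$ in the cyclic order (for a $k$-anemone, any other petal). *)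

theory Defs
  imports Main
begin

definition connectivity_system :: "'a set \<Rightarrow> ('a set \<Rightarrow> int) \<Rightarrow> bool" where
  "connectivity_system E lam \<longleftrightarrow> finite E
     \<and> (\<forall>X. X \<subseteq> E \<longrightarrow> lam X = lam (E - X))
     \<and> (\<forall>X Y. X \<subseteq> E \<longrightarrow> Y \<subseteq> E \<longrightarrow> lam (X \<union> Y) + lam (X \<inter> Y) \<le> lam X + lam Y)"

definition k_separating :: "'a set \<Rightarrow> ('a set \<Rightarrow> int) \<Rightarrow> int \<Rightarrow> 'a set \<Rightarrow> bool" where
  "k_separating E lam k X \<longleftrightarrow> X \<subseteq> E \<and> lam X \<le> k"

definition tangle :: "'a set \<Rightarrow> ('a set \<Rightarrow> int) \<Rightarrow> int \<Rightarrow> 'a set set \<Rightarrow> bool" where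
  "tangle E lam k T \<longleftrightarrow>
     (\<forall>A\<in>T. A \<subseteq> E \<and> lam A < k)
     \<and> (\<forall>A. A \<subseteq> E \<longrightarrow> lam A \<le> k - 1 \<longrightarrow> A \<in> T \<or> E - A \<in> T)
     \<and> (\<forall>A\<in>T. \<forall>B\<in>T. \<forall>C\<in>T. A \<union> B \<union> C \<noteq> E)
     \<and> (\<forall>e\<in>E. E - {e} \<notin> T)"

definition T_weak :: "'a set set \<Rightarrow> 'a set \<Rightarrow> bool" where
  "T_weak T X \<longleftrightarrow> (\<exists>A\<in>T. X \<subseteq> A)"

definition T_strong :: "'a set set \<Rightarrow> 'a set \<Rightarrow> bool" where
  "T_strong T X \<longleftrightarrow> \<not> T_weak T X"

text \<open>A T-strong k-separation (X, E - X), represented by one of its sides X.\<close>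
definition strong_ksep :: "'a set \<Rightarrow> ('a set \<Rightarrow> int) \<Rightarrow> int \<Rightarrow> 'a set set \<Rightarrow> 'a set \<Rightarrow> bool" where
  "strong_ksep E lam k T X \<longleftrightarrow> k_separating E lam k X \<and> T_strong T X \<and> T_strong T (E - X)"

definition fully_closed :: "'a set \<Rightarrow> ('a set \<Rightarrow> int) \<Rightarrow> int \<Rightarrow> 'a set set \<Rightarrow> 'a set \<Rightarrow> bool" where
  "fully_closed E lam k T X \<longleftrightarrow> T_strong T X \<and> k_separating E lam k X
     \<and> (\<forall>Y. Y \<subseteq> E - X \<longrightarrow> Y \<noteq> {} \<longrightarrow> T_weak T Y \<longrightarrow> \<not> k_separating E lam k (X \<union> Y))"

definition fcl :: "'a set \<Rightarrow> ('a set \<Rightarrow> int) \<Rightarrow> int \<Rightarrow> 'a set set \<Rightarrow> 'a set \<Rightarrow> 'a set" where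
  "fcl E lam k T X = E \<inter> \<Inter> {Z. fully_closed E lam k T Z \<and> X \<subseteq> Z}"

definition T_equiv_sep :: "'a set \<Rightarrow> ('a set \<Rightarrow> int) \<Rightarrow> int \<Rightarrow> 'a set set \<Rightarrow> 'a set \<Rightarrow> 'a set \<Rightarrow> bool" where
  "T_equiv_sep E lam k T X X' \<longleftrightarrow> strong_ksep E lam k T X \<and> strong_ksep E lam k T X'
     \<and> {fcl E lam k T X, fcl E lam k T (E - X)} = {fcl E lam k T X', fcl E lam k T (E - X')}"

definition T_sequential :: "'a set \<Rightarrow> ('a set \<Rightarrow> int) \<Rightarrow> int \<Rightarrow> 'a set set \<Rightarrow> 'a set \<Rightarrow> bool" where
  "T_sequential E lam k T X \<longleftrightarrow> k_separating E lam k X \<and> T_strong T (E - X)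
     \<and> fcl E lam k T (E - X) = E"

definition kS_sep :: "'a set \<Rightarrow> ('a set \<Rightarrow> int) \<Rightarrow> int \<Rightarrow> 'a set set \<Rightarrow> 'a set \<Rightarrow> bool" where
  "kS_sep E lam k S X \<longleftrightarrow> k_separating E lam k X \<and> X \<in> S \<and> E - X \<in> S"

definition tree_compatible :: "'a set \<Rightarrow> ('a set \<Rightarrow> int) \<Rightarrow> int \<Rightarrow> 'a set set \<Rightarrow> 'a set set \<Rightarrow> bool" where
  "tree_compatible E lam k T S \<longleftrightarrow>
     (\<forall>X\<in>S. k_separating E lam k X \<and> T_strong T (E - X) \<and> \<not> T_sequential E lam k T X)
     \<and> (\<forall>X X'. strong_ksep E lam k T X \<longrightarrow> kS_sep E lam k S X' \<longrightarrow> T_equiv_sep E lam k T X X'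
           \<longrightarrow> kS_sep E lam k S X)
     \<and> (\<forall>X Y. X \<in> S \<longrightarrow> strong_ksep E lam k T Y \<longrightarrow> X \<subseteq> Y \<longrightarrow> Y \<in> S)"

text \<open>A flower (P_1,...,P_n) is a list; petal P_(i+1) is \<open>Ps ! i\<close>, indices taken mod n.\<close>
definition k_flower :: "'a set \<Rightarrow> ('a set \<Rightarrow> int) \<Rightarrow> int \<Rightarrow> 'a set set \<Rightarrow> 'a set list \<Rightarrow> bool" where
  "k_flower E lam k T Ps \<longleftrightarrow> (let n = length Ps in
       (\<Union>i<n. Ps ! i) = E
     \<and> (\<forall>i<n. \<forall>j<n. i \<noteq> j \<longrightarrow> Ps ! i \<inter> Ps ! j = {})
     \<and> (\<forall>i<n. Ps ! i \<noteq> {} \<and> T_strong T (Ps ! i))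
     \<and> (\<forall>i<n. k_separating E lam k (Ps ! i)
             \<and> k_separating E lam k (Ps ! i \<union> Ps ! ((i + 1) mod n))))"

definition displays :: "'a set list \<Rightarrow> 'a set \<Rightarrow> bool" where
  "displays Ps X \<longleftrightarrow> (\<exists>I \<subseteq> {..<length Ps}. X = (\<Union>i\<in>I. Ps ! i))"

definition flower_le_S :: "'a set \<Rightarrow> ('a set \<Rightarrow> int) \<Rightarrow> int \<Rightarrow> 'a set set \<Rightarrow> 'a set set
    \<Rightarrow> 'a set list \<Rightarrow> 'a set list \<Rightarrow> bool" where
  "flower_le_S E lam k T S Ps Qs \<longleftrightarrow>
     (\<forall>X. kS_sep E lam k S X \<longrightarrow> displays Ps X \<longrightarrow>
        (\<exists>Y. kS_sep E lam k S Y \<and> displays Qs Y \<and> T_equiv_sep E lam k T X Y))"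

definition flower_equiv_S :: "'a set \<Rightarrow> ('a set \<Rightarrow> int) \<Rightarrow> int \<Rightarrow> 'a set set \<Rightarrow> 'a set set
    \<Rightarrow> 'a set list \<Rightarrow> 'a set list \<Rightarrow> bool" where
  "flower_equiv_S E lam k T S Ps Qs \<longleftrightarrow>
     flower_le_S E lam k T S Ps Qs \<and> flower_le_S E lam k T S Qs Ps"

definition S_order :: "'a set \<Rightarrow> ('a set \<Rightarrow> int) \<Rightarrow> int \<Rightarrow> 'a set set \<Rightarrow> 'a set set
    \<Rightarrow> 'a set list \<Rightarrow> nat" where
  "S_order E lam k T S Ps =
     (LEAST m. \<exists>Qs. k_flower E lam k T Qs \<and> flower_equiv_S E lam k T S Qs Ps \<and> length Qs = m)"

definition k_anemone :: "'a set \<Rightarrow> ('a set \<Rightarrow> int) \<Rightarrow> int \<Rightarrow> 'a set set \<Rightarrow> 'a set list \<Rightarrow> bool" where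
  "k_anemone E lam k T Ps \<longleftrightarrow> k_flower E lam k T Ps
     \<and> (\<forall>I \<subseteq> {..<length Ps}. (\<Union>i\<in>I. Ps ! i) \<noteq> {} \<longrightarrow> k_separating E lam k (\<Union>i\<in>I. Ps ! i))"

definition consecutive :: "nat \<Rightarrow> nat \<Rightarrow> nat \<Rightarrow> bool" where
  "consecutive n i j \<longleftrightarrow> j = (i + 1) mod n \<or> i = (j + 1) mod n"

text \<open>Petal i (0-based) is T-loose (only meaningful for n \<ge> 2).\<close>
definition T_loose :: "'a set \<Rightarrow> ('a set \<Rightarrow> int) \<Rightarrow> int \<Rightarrow> 'a set set \<Rightarrow> 'a set list \<Rightarrow> nat \<Rightarrow> bool" where
  "T_loose E lam k T Ps i \<longleftrightarrow> 2 \<le> length Ps \<and> i < length Ps \<and>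
     (\<exists>j<length Ps. j \<noteq> i \<and> (consecutive (length Ps) i j \<or> k_anemone E lam k T Ps)
        \<and> Ps ! i \<subseteq> fcl E lam k T (Ps ! j))"

end

theory Submission
  imports Defs
begin


locale L46 =
  fixes E :: "'a set" and lam :: "'a set \<Rightarrow> int" and k :: int
    and T S :: "'a set set" and Ps :: "'a set list" and X :: "'a set"
  assumes cs: "connectivity_system E lam"
  and tg: "tangle E lam k T"
  and tc: "tree_compatible E lam k T S"
  and fl: "k_flower E lam k T Ps"
  and n2: "2 \<le> length Ps"
  and nl: "\<forall>i<length Ps. \<not> T_loose E lam k T Ps i"
  and XE: "X \<subseteq> E - Ps ! 0" and Xne: "X \<noteq> {}" and Xw: "T_weak T X"
  and P0X: "k_separating E lam k (Ps ! 0 \<union> X)"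
begin

lemma symm: "A \<subseteq> E \<Longrightarrow> lam A = lam (E - A)"
  using cs unfolding connectivity_system_def by blast

lemma subm: "A \<subseteq> E \<Longrightarrow> B \<subseteq> E \<Longrightarrow> lam (A \<union> B) + lam (A \<inter> B) \<le> lam A + lam B"
  using cs unfolding connectivity_system_def by blast

lemma lam_empty: assumes "A \<subseteq> E" shows "lam {} \<le> lam A"
proof -
  have "lam (A \<union> (E-A)) + lam (A \<inter> (E - A)) \<le> lam A + lam (E - A)"
    using subm[of A "E-A"] assms by auto
  moreover have "A \<union> (E-A) = E" "A \<inter> (E-A) = {}" using assms by auto
  moreover have "lam E = lam {}" using symm[of E] by simp
  moreover have "lam (E-A) = lam A" using symm[OF assms] by simp
  ultimately show ?thesis by simp
qed

lemma petal: "i < length Ps \<Longrightarrow> Ps ! i \<subseteq> E \<and> Ps ! i \<noteq> {} \<and> T_strong T (Ps ! i) \<and> lam (Ps ! i) \<le> k"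
  using fl unfolding k_flower_def Let_def k_separating_def by auto

lemma petal_pair: "i < length Ps \<Longrightarrow> lam (Ps ! i \<union> Ps ! ((i+1) mod length Ps)) \<le> k"
  using fl unfolding k_flower_def Let_def k_separating_def by auto

lemma disj: "i < length Ps \<Longrightarrow> j < length Ps \<Longrightarrow> i \<noteq> j \<Longrightarrow> Ps ! i \<inter> Ps ! j = {}"
  using fl unfolding k_flower_def Let_def by auto

lemma unionE: "(\<Union>i<length Ps. Ps ! i) = E"
  using fl unfolding k_flower_def Let_def by auto

lemma weak_mono: "T_weak T B \<Longrightarrow> A \<subseteq> B \<Longrightarrow> T_weak T A"
  unfolding T_weak_def by blast
lemma strong_mono: "T_strong T A \<Longrightarrow> A \<subseteq> B \<Longrightarrow> T_strong T B"
  unfolding T_strong_def T_weak_def by blast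
lemma empty_weak: "T_weak T {}" using Xw unfolding T_weak_def by blast
lemma strong_ne: "T_strong T A \<Longrightarrow> A \<noteq> {}" using empty_weak unfolding T_strong_def by auto

lemma strong_ge:
  assumes "A \<subseteq> E" "T_strong T A" "T_strong T (E - A)" shows "k \<le> lam A"
proof (rule ccontr)
  assume "\<not> k \<le> lam A" then have "lam A \<le> k - 1" by simp
  with tg assms(1) have "A \<in> T \<or> E - A \<in> T" unfolding tangle_def by blast
  thus False using assms unfolding T_strong_def T_weak_def by blast
qed

lemma Psne: "Ps \<noteq> []" using n2 by auto
lemma P0sub: "Ps ! 0 \<subseteq> E" "T_strong T (Ps ! 0)" using petal[of 0] Psne by auto

lemma lamE: "lam E \<le> k"
proof -
  have "lam E = lam {}" using symm[of E] by simp
  also have "\<dots> \<le> lam (Ps ! 0)" using lam_empty P0sub by auto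
  also have "\<dots> \<le> k" using petal[of 0] Psne by auto
  finally show ?thesis .
qed

lemma XsubE: "X \<subseteq> E" and XP0: "X \<inter> Ps ! 0 = {}" using XE by auto

lemma fc_basic: "fully_closed E lam k T Z \<Longrightarrow> Z \<subseteq> E \<and> lam Z \<le> k"
  unfolding fully_closed_def k_separating_def by auto

lemma fc_compl:
  assumes fc: "fully_closed E lam k T Z" and ne: "Z \<noteq> E" shows "T_strong T (E - Z)"
proof (rule ccontr)
  assume "\<not> T_strong T (E - Z)"
  hence w: "T_weak T (E - Z)" unfolding T_strong_def by simp
  have ZE: "Z \<subseteq> E" using fc_basic[OF fc] by simp
  hence "E - Z \<noteq> {}" using ne by auto
  with fc w have "\<not> k_separating E lam k (Z \<union> (E - Z))" unfolding fully_closed_def by blast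
  moreover have "Z \<union> (E - Z) = E" using ZE by auto
  ultimately show False using lamE unfolding k_separating_def by auto
qed

lemma FCmain:
  assumes fc: "fully_closed E lam k T Z" and AE: "A \<subseteq> E" and lA: "lam A \<le> k"
    and st: "T_strong T (Z \<inter> A)" and wk: "T_weak T (A - Z)"
  shows "A \<subseteq> Z"
proof (rule ccontr)
  assume nA: "\<not> A \<subseteq> Z"
  have ZE: "Z \<subseteq> E" and lZ: "lam Z \<le> k" using fc_basic[OF fc] by auto
  have "Z \<noteq> E" using nA AE by auto
  hence sc: "T_strong T (E - Z)" using fc_compl[OF fc] by simp
  have "k \<le> lam (Z \<inter> A)"
    by (rule strong_ge) (use ZE st strong_mono[OF sc, of "E - (Z \<inter> A)"] in auto)
  moreover have "lam (Z \<union> A) + lam (Z \<inter> A) \<le> lam Z + lam A" using subm ZE AE by blast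
  ultimately have l: "lam (Z \<union> A) \<le> k" using lZ lA by simp
  have "A - Z \<subseteq> E - Z" "A - Z \<noteq> {}" using AE nA by auto
  with fc wk have "\<not> k_separating E lam k (Z \<union> (A - Z))" unfolding fully_closed_def by blast
  moreover have "Z \<union> (A - Z) = Z \<union> A" by auto
  ultimately show False using l ZE AE unfolding k_separating_def by auto
qed

lemma lemL:
  assumes DE: "D \<subseteq> E" and lD: "lam D \<le> k" and D0: "D \<inter> Ps ! 0 = {}" and sD: "T_strong T D"
  shows "lam (D - X) \<le> k"
proof -
  let ?C = "E - (Ps ! 0 \<union> X)"
  have A: "Ps ! 0 \<union> X \<subseteq> E" using P0sub XsubE by auto
  have lC: "lam ?C \<le> k" using symm[OF A] P0X unfolding k_separating_def by simp
  have "D \<inter> ?C = D - X" using DE D0 by auto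
  have e: "E - (D \<union> ?C) = (Ps ! 0 \<union> X) - D" using DE A by auto
  have "k \<le> lam ((Ps ! 0 \<union> X) - D)"
  proof (rule strong_ge)
    show "Ps ! 0 \<union> X - D \<subseteq> E" using A by blast
    show "T_strong T (Ps ! 0 \<union> X - D)" by (rule strong_mono[OF P0sub(2)]) (use D0 in auto)
    show "T_strong T (E - (Ps ! 0 \<union> X - D))" by (rule strong_mono[OF sD]) (use DE in auto)
  qed
  moreover have "lam (D \<union> ?C) = lam ((Ps ! 0 \<union> X) - D)"
    using symm[of "D \<union> ?C"] e DE by auto
  moreover have "lam (D \<union> ?C) + lam (D \<inter> ?C) \<le> lam D + lam ?C" using subm DE by blast
  ultimately show ?thesis using lD lC \<open>D \<inter> ?C = D - X\<close> by simp
qed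

lemma lemL':
  assumes DE: "D \<subseteq> E" and lD: "lam D \<le> k" and D0: "Ps ! 0 \<subseteq> D" and sD: "T_strong T (E - D)"
  shows "lam (D \<union> X) \<le> k"
proof -
  have A: "Ps ! 0 \<union> X \<subseteq> E" using P0sub XsubE by auto
  have "k \<le> lam (D \<inter> (Ps ! 0 \<union> X))"
  proof (rule strong_ge)
    show "D \<inter> (Ps ! 0 \<union> X) \<subseteq> E" using A by auto
    show "T_strong T (D \<inter> (Ps ! 0 \<union> X))" by (rule strong_mono[OF P0sub(2)]) (use D0 in auto)
    show "T_strong T (E - (D \<inter> (Ps ! 0 \<union> X)))" by (rule strong_mono[OF sD]) auto
  qed
  moreover have "lam (D \<union> (Ps ! 0 \<union> X)) + lam (D \<inter> (Ps ! 0 \<union> X)) \<le> lam D + lam (Ps ! 0 \<union> X)"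
    using subm DE A by blast
  moreover have "D \<union> (Ps ! 0 \<union> X) = D \<union> X" using D0 by auto
  ultimately show ?thesis using lD P0X unfolding k_separating_def by simp
qed

lemma fc0: assumes fc: "fully_closed E lam k T Z" and "Ps ! 0 \<subseteq> Z" shows "X \<subseteq> Z"
proof -
  have "Ps ! 0 \<union> X \<subseteq> Z"
  proof (rule FCmain[OF fc])
    show "Ps ! 0 \<union> X \<subseteq> E" using P0sub XsubE by auto
    show "lam (Ps ! 0 \<union> X) \<le> k" using P0X unfolding k_separating_def by simp
    show "T_strong T (Z \<inter> (Ps ! 0 \<union> X))" by (rule strong_mono[OF P0sub(2)]) (use assms in auto)
    show "T_weak T (Ps ! 0 \<union> X - Z)" by (rule weak_mono[OF Xw]) (use assms in auto)
  qed
  thus ?thesis by auto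
qed

end


context L46 begin

lemma fcl_eq: "(\<And>Z. fully_closed E lam k T Z \<Longrightarrow> A \<subseteq> Z \<longleftrightarrow> B \<subseteq> Z) \<Longrightarrow> fcl E lam k T A = fcl E lam k T B"
  unfolding fcl_def by (metis (mono_tags, lifting) Collect_cong)

lemma strongPX: "1 \<le> i \<Longrightarrow> i < length Ps \<Longrightarrow> T_strong T (Ps ! i - X)"
proof (induction "length Ps - i" arbitrary: i rule: less_induct)
  case less
  let ?n = "length Ps"
  let ?j = "(i + 1) mod ?n"
  show ?case
  proof (rule ccontr)
    assume "\<not> T_strong T (Ps ! i - X)"
    hence w: "T_weak T (Ps ! i - X)" unfolding T_strong_def by simp
    have iE: "Ps ! i \<subseteq> E" and si: "T_strong T (Ps ! i)" using petal less.prems by auto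
    have "0 < ?n" using Psne by simp
    hence jlt: "?j < ?n" by (rule mod_less_divisor)
    have ji: "?j \<noteq> i"
    proof (cases "i + 1 = ?n")
      case True thus ?thesis using less.prems by simp
    next
      case False thus ?thesis using less.prems by simp
    qed
    have "Ps ! i \<subseteq> fcl E lam k T (Ps ! ?j)"
      unfolding fcl_def
    proof (intro Int_greatest iE Inter_greatest)
      fix Z assume "Z \<in> {Z. fully_closed E lam k T Z \<and> Ps ! ?j \<subseteq> Z}"
      hence fc: "fully_closed E lam k T Z" and jZ: "Ps ! ?j \<subseteq> Z" by auto
      show "Ps ! i \<subseteq> Z"
      proof (cases "i + 1 = ?n")
        case True
        hence j0: "?j = 0" by simp
        have XZ: "X \<subseteq> Z" using fc0[OF fc] jZ j0 by simp
        have "Ps ! i \<union> Ps ! 0 \<subseteq> Z"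
        proof (rule FCmain[OF fc])
          show "Ps ! i \<union> Ps ! 0 \<subseteq> E" using iE P0sub by auto
          show "lam (Ps ! i \<union> Ps ! 0) \<le> k" using petal_pair[of i] less.prems j0 by simp
          show "T_strong T (Z \<inter> (Ps ! i \<union> Ps ! 0))"
            by (rule strong_mono[OF P0sub(2)]) (use jZ j0 in auto)
          show "T_weak T (Ps ! i \<union> Ps ! 0 - Z)"
            by (rule weak_mono[OF w]) (use jZ j0 XZ in auto)
        qed
        thus ?thesis by auto
      next
        case False
        hence j1: "?j = i + 1" and i1: "i + 1 < ?n" using less.prems by auto
        have IH: "T_strong T (Ps ! (i+1) - X)"
          using less.hyps[of "i+1"] i1 less.prems by auto
        have i1E: "Ps ! (i+1) \<subseteq> E" and si1: "T_strong T (Ps ! (i+1))" using petal i1 by auto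
        have d0: "(Ps ! i \<union> Ps ! (i+1)) \<inter> Ps ! 0 = {}"
          using disj[of i 0] disj[of "i+1" 0] less.prems i1 Psne by auto
        have "Ps ! i \<union> Ps ! (i+1) - X \<subseteq> Z"
        proof (rule FCmain[OF fc])
          show "Ps ! i \<union> Ps ! (i+1) - X \<subseteq> E" using iE i1E by auto
          show "lam (Ps ! i \<union> Ps ! (i+1) - X) \<le> k"
            by (rule lemL) (use iE i1E petal_pair[of i] less.prems j1 d0 strong_mono[OF si] in auto)
          show "T_strong T (Z \<inter> (Ps ! i \<union> Ps ! (i+1) - X))"
            by (rule strong_mono[OF IH]) (use jZ j1 in auto)
          show "T_weak T (Ps ! i \<union> Ps ! (i+1) - X - Z)"
            by (rule weak_mono[OF w]) (use jZ j1 in auto)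
        qed
        hence a: "Ps ! i - X \<subseteq> Z" by auto
        have "Ps ! i \<union> Ps ! (i+1) \<subseteq> Z"
        proof (rule FCmain[OF fc])
          show "Ps ! i \<union> Ps ! (i+1) \<subseteq> E" using iE i1E by auto
          show "lam (Ps ! i \<union> Ps ! (i+1)) \<le> k" using petal_pair[of i] less.prems j1 by simp
          show "T_strong T (Z \<inter> (Ps ! i \<union> Ps ! (i+1)))"
            by (rule strong_mono[OF si1]) (use jZ j1 in auto)
          show "T_weak T (Ps ! i \<union> Ps ! (i+1) - Z)"
            by (rule weak_mono[OF Xw]) (use jZ j1 a in auto)
        qed
        thus ?thesis by auto
      qed
    qed
    hence "T_loose E lam k T Ps i"
      unfolding T_loose_def consecutive_def using n2 less.prems jlt ji by blast
    thus False using nl less.prems by auto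
  qed
qed

lemma fclPX: assumes "1 \<le> i" "i < length Ps"
  shows "fcl E lam k T (Ps ! i - X) = fcl E lam k T (Ps ! i)"
proof (rule fcl_eq)
  fix Z assume fc: "fully_closed E lam k T Z"
  have s: "T_strong T (Ps ! i - X)" using strongPX assms by auto
  have iE: "Ps ! i \<subseteq> E" "lam (Ps ! i) \<le> k" using petal assms by auto
  show "Ps ! i - X \<subseteq> Z \<longleftrightarrow> Ps ! i \<subseteq> Z"
  proof
    assume a: "Ps ! i - X \<subseteq> Z"
    show "Ps ! i \<subseteq> Z"
    proof (rule FCmain[OF fc iE])
      show "T_strong T (Z \<inter> Ps ! i)" by (rule strong_mono[OF s]) (use a in auto)
      show "T_weak T (Ps ! i - Z)" by (rule weak_mono[OF Xw]) (use a in auto)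
    qed
  qed auto
qed

lemma fclP0X: "fcl E lam k T (Ps ! 0) = fcl E lam k T (Ps ! 0 \<union> X)"
  by (rule fcl_eq) (use fc0 in auto)

end


context L46 begin

definition Qs where "Qs = (Ps ! 0 \<union> X) # map (\<lambda>P. P - X) (tl Ps)"

lemma Qlen: "length Qs = length Ps" unfolding Qs_def using Psne by (cases Ps) auto

lemma Qnth: "i < length Ps \<Longrightarrow> Qs ! i = (if i = 0 then Ps ! 0 \<union> X else Ps ! i - X)"
  unfolding Qs_def using Psne by (cases i; cases Ps) auto

lemma Qstrong: "i < length Ps \<Longrightarrow> T_strong T (Qs ! i)"
  using Qnth[of i] strongPX[of i] strong_mono[OF P0sub(2)] by (cases "i = 0") auto

lemma QsubE: "i < length Ps \<Longrightarrow> Qs ! i \<subseteq> E"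
  using Qnth[of i] petal[of i] XsubE by auto

lemma Qflower: "k_flower E lam k T Qs"
  unfolding k_flower_def Let_def Qlen
proof (intro conjI allI impI)
  show "(\<Union>i<length Ps. Qs ! i) = E"
  proof
    show "(\<Union>i<length Ps. Qs ! i) \<subseteq> E"
      using Qnth petal XsubE by (auto split: if_splits)
  next
    show "E \<subseteq> (\<Union>i<length Ps. Qs ! i)"
    proof
      fix x assume xE: "x \<in> E"
      show "x \<in> (\<Union>i<length Ps. Qs ! i)"
      proof (cases "x \<in> X")
        case True thus ?thesis using Qnth[of 0] Psne by force
      next
        case False
        obtain i where "i < length Ps" "x \<in> Ps ! i" using xE unionE by blast
        thus ?thesis using Qnth[of i] False by (cases "i = 0") force+
      qed
    qed
  qed
next
  fix i j assume "i < length Ps" "j < length Ps" "i \<noteq> j"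
  thus "Qs ! i \<inter> Qs ! j = {}"
  proof (cases "i = 0")
    case True
    hence "j \<noteq> 0" using \<open>i \<noteq> j\<close> by simp
    thus ?thesis using True Qnth[of i] Qnth[of j] disj[of i j] \<open>i < length Ps\<close> \<open>j < length Ps\<close> by auto
  next
    case False
    show ?thesis
    proof (cases "j = 0")
      case True
      thus ?thesis using False Qnth[of i] Qnth[of j] disj[of i j] \<open>i < length Ps\<close> \<open>j < length Ps\<close> by auto
    next
      case F2: False
      thus ?thesis using False Qnth[of i] Qnth[of j] disj[of i j] \<open>i < length Ps\<close> \<open>j < length Ps\<close> \<open>i \<noteq> j\<close> by auto
    qed
  qed
next
  fix i assume i: "i < length Ps"
  show "Qs ! i \<noteq> {}" using strong_ne Qstrong i by auto
  show "T_strong T (Qs ! i)" using Qstrong i by auto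
  show "k_separating E lam k (Qs ! i)"
  proof (cases "i = 0")
    case True thus ?thesis using P0X Qnth i by simp
  next
    case False
    have d: "Ps ! i \<inter> Ps ! 0 = {}" using disj[of i 0] i False Psne by auto
    have "lam (Ps ! i - X) \<le> k"
      by (rule lemL) (use petal[OF i] d in auto)
    thus ?thesis using Qnth i False petal[OF i] unfolding k_separating_def by auto
  qed
  show "k_separating E lam k (Qs ! i \<union> Qs ! ((i + 1) mod length Ps))"
  proof -
    have P1: "Ps ! 1 \<subseteq> E" "T_strong T (Ps ! 1)" using petal[of 1] n2 by auto
    have Un: "Qs ! i \<union> Qs ! ((i + 1) mod length Ps) \<subseteq> E"
    proof -
      have "0 < length Ps" using Psne by simp
      hence jlt: "(i+1) mod length Ps < length Ps" by (rule mod_less_divisor)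
      show ?thesis using QsubE[OF i] QsubE[OF jlt] by blast
    qed
    have "lam (Qs ! i \<union> Qs ! ((i + 1) mod length Ps)) \<le> k"
    proof (cases "i = 0")
      case True
      have "1 < length Ps" using n2 by simp
      hence j: "(i + 1) mod length Ps = 1" using True by simp
      have q0: "Qs ! 0 = Ps ! 0 \<union> X" using Qnth[of 0] Psne by simp
      have q1: "Qs ! 1 = Ps ! 1 - X" using Qnth[of 1] \<open>1 < length Ps\<close> by simp
      have eq: "Qs ! i \<union> Qs ! ((i + 1) mod length Ps) = (Ps ! 0 \<union> Ps ! 1) \<union> X"
        using q0 q1 True j by auto
      show ?thesis
      proof (cases "length Ps = 2")
        case True
        have "{..<length Ps} = {0,1}" using True by auto
        hence "(Ps ! 0 \<union> Ps ! 1) = E" using unionE by simp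
        hence "(Ps ! 0 \<union> Ps ! 1) \<union> X = E" using XsubE by blast
        thus ?thesis using eq lamE by simp
      next
        case False
        hence n3: "2 < length Ps" using n2 by simp
        have "lam ((Ps ! 0 \<union> Ps ! 1) \<union> X) \<le> k"
        proof (rule lemL')
          show "Ps ! 0 \<union> Ps ! 1 \<subseteq> E" using P0sub P1 by auto
          show "lam (Ps ! 0 \<union> Ps ! 1) \<le> k" using petal_pair[of 0] Psne \<open>1 < length Ps\<close> by simp
          show "Ps ! 0 \<subseteq> Ps ! 0 \<union> Ps ! 1" by auto
          show "T_strong T (E - (Ps ! 0 \<union> Ps ! 1))"
            by (rule strong_mono[of "Ps ! 2"]) (use petal[of 2] disj[of 2 0] disj[of 2 1] n3 Psne in auto)
        qed
        thus ?thesis using eq by simp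
      qed
    next
      case False
      show ?thesis
      proof (cases "i + 1 = length Ps")
        case True
        hence j: "(i + 1) mod length Ps = 0" by simp
        have eq: "Qs ! i \<union> Qs ! ((i + 1) mod length Ps) = (Ps ! i \<union> Ps ! 0) \<union> X"
          using Qnth[of 0] Qnth[of i] False i j Psne by auto
        show ?thesis
        proof (cases "length Ps = 2")
          case True
          hence "i = 1" using False i by simp
          have "{..<length Ps} = {0,1}" using True by auto
          hence "(Ps ! 0 \<union> Ps ! 1) = E" using unionE by simp
          hence "(Ps ! i \<union> Ps ! 0) \<union> X = E" using XsubE \<open>i = 1\<close> by blast
          thus ?thesis using eq lamE by simp
        next
          case n3': False
          hence n3: "2 < length Ps" using n2 by simp
          have i1: "i \<noteq> 1" using True n3 by simp
          have "lam ((Ps ! i \<union> Ps ! 0) \<union> X) \<le> k"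
          proof (rule lemL')
            show "Ps ! i \<union> Ps ! 0 \<subseteq> E" using P0sub petal[OF i] by auto
            show "lam (Ps ! i \<union> Ps ! 0) \<le> k" using petal_pair[OF i] j by simp
            show "Ps ! 0 \<subseteq> Ps ! i \<union> Ps ! 0" by auto
            show "T_strong T (E - (Ps ! i \<union> Ps ! 0))"
              by (rule strong_mono[OF P1(2)]) (use P1 disj[of 1 0] disj[of 1 i] n3 i i1 Psne in auto)
          qed
          thus ?thesis using eq by simp
        qed
      next
        case nT: False
        hence j: "(i + 1) mod length Ps = i + 1" and i1: "i + 1 < length Ps" using i by auto
        have eq: "Qs ! i \<union> Qs ! ((i + 1) mod length Ps) = (Ps ! i \<union> Ps ! (i+1)) - X"
          using Qnth[of i] Qnth[of "i+1"] False i1 j by auto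
        have "lam ((Ps ! i \<union> Ps ! (i+1)) - X) \<le> k"
        proof (rule lemL)
          show "Ps ! i \<union> Ps ! (i+1) \<subseteq> E" using petal[OF i] petal[OF i1] by auto
          show "lam (Ps ! i \<union> Ps ! (i+1)) \<le> k" using petal_pair[OF i] j by simp
          show "(Ps ! i \<union> Ps ! (i+1)) \<inter> Ps ! 0 = {}"
            using disj[of i 0] disj[of "i+1" 0] i i1 False Psne by auto
          show "T_strong T (Ps ! i \<union> Ps ! (i+1))" by (rule strong_mono) (use petal[OF i] in auto)
        qed
        thus ?thesis using eq by simp
      qed
    qed
    thus ?thesis using Un unfolding k_separating_def by simp
  qed
qed

end



lemma part_compl:
  assumes U: "(\<Union>i<length L. L ! i) = E"
    and D: "\<forall>i<length L. \<forall>j<length L. i \<noteq> j \<longrightarrow> L ! i \<inter> L ! j = {}"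
    and I: "I \<subseteq> {..<length L}"
  shows "E - (\<Union>i\<in>I. L ! i) = (\<Union>i\<in>{..<length L} - I. L ! i)"
proof
  show "E - (\<Union>i\<in>I. L ! i) \<subseteq> (\<Union>i\<in>{..<length L} - I. L ! i)"
  proof
    fix x assume x: "x \<in> E - (\<Union>i\<in>I. L ! i)"
    then obtain m where "m < length L" "x \<in> L ! m" using U by blast
    moreover have "m \<notin> I" using x \<open>x \<in> L ! m\<close> by blast
    ultimately show "x \<in> (\<Union>i\<in>{..<length L} - I. L ! i)" by blast
  qed
next
  show "(\<Union>i\<in>{..<length L} - I. L ! i) \<subseteq> E - (\<Union>i\<in>I. L ! i)"
  proof
    fix x assume "x \<in> (\<Union>i\<in>{..<length L} - I. L ! i)"
    then obtain m where m: "m < length L" "m \<notin> I" "x \<in> L ! m" by blast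
    have "x \<in> E" using U m by blast
    moreover have "x \<notin> (\<Union>i\<in>I. L ! i)"
    proof
      assume "x \<in> (\<Union>i\<in>I. L ! i)"
      then obtain i where "i \<in> I" "x \<in> L ! i" by blast
      have "i < length L" using I \<open>i \<in> I\<close> by blast
      moreover have "i \<noteq> m" using \<open>i \<in> I\<close> m(2) by blast
      ultimately have "L ! i \<inter> L ! m = {}" using D m(1) by blast
      thus False using \<open>x \<in> L ! i\<close> m(3) by blast
    qed
    ultimately show "x \<in> E - (\<Union>i\<in>I. L ! i)" by blast
  qed
qed

context L46 begin

lemma petalE: "i < length Ps \<Longrightarrow> Ps ! i \<subseteq> E" using petal by blast

lemma Pcompl: "I \<subseteq> {..<length Ps} \<Longrightarrow> E - (\<Union>i\<in>I. Ps ! i) = (\<Union>i\<in>{..<length Ps} - I. Ps ! i)"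
proof (rule part_compl[OF unionE])
  show "\<forall>i<length Ps. \<forall>j<length Ps. i \<noteq> j \<longrightarrow> Ps ! i \<inter> Ps ! j = {}"
  proof (intro allI impI)
    fix i j assume "i < length Ps" "j < length Ps" "i \<noteq> j"
    thus "Ps ! i \<inter> Ps ! j = {}" by (rule disj)
  qed
qed

lemma Qcompl: "I \<subseteq> {..<length Ps} \<Longrightarrow> E - (\<Union>i\<in>I. Qs ! i) = (\<Union>i\<in>{..<length Ps} - I. Qs ! i)"
proof -
  assume I: "I \<subseteq> {..<length Ps}"
  have f: "k_flower E lam k T Qs" by (rule Qflower)
  have u: "(\<Union>i<length Qs. Qs ! i) = E" using f unfolding k_flower_def Let_def by blast
  have d: "\<forall>i<length Qs. \<forall>j<length Qs. i \<noteq> j \<longrightarrow> Qs ! i \<inter> Qs ! j = {}"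
    using f unfolding k_flower_def Let_def by blast
  have "I \<subseteq> {..<length Qs}" using I Qlen by simp
  from part_compl[OF u d this] show ?thesis using Qlen by simp
qed

lemma QunionJ: "J \<subseteq> {..<length Ps} \<Longrightarrow> 0 \<notin> J \<Longrightarrow> (\<Union>i\<in>J. Qs ! i) = (\<Union>i\<in>J. Ps ! i) - X"
proof -
  assume J: "J \<subseteq> {..<length Ps}" "0 \<notin> J"
  have "\<And>i. i \<in> J \<Longrightarrow> Qs ! i = Ps ! i - X"
  proof -
    fix i assume "i \<in> J"
    have "i < length Ps" using J \<open>i \<in> J\<close> by auto
    moreover have "i \<noteq> 0" using J(2) \<open>i \<in> J\<close> by metis
    ultimately show "Qs ! i = Ps ! i - X" using Qnth[of i] by simp
  qed
  thus ?thesis by auto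
qed

lemma UJ_facts:
  assumes J: "J \<subseteq> {..<length Ps}" "0 \<notin> J" "J \<noteq> {}"
  shows "(\<Union>i\<in>J. Ps ! i) \<subseteq> E" "(\<Union>i\<in>J. Ps ! i) \<inter> Ps ! 0 = {}"
    "T_strong T (\<Union>i\<in>J. Ps ! i)" "T_strong T ((\<Union>i\<in>J. Ps ! i) - X)"
proof -
  show "(\<Union>i\<in>J. Ps ! i) \<subseteq> E" using J petalE by blast
  have "\<And>i. i \<in> J \<Longrightarrow> Ps ! i \<inter> Ps ! 0 = {}" using J disj Psne by auto
  thus "(\<Union>i\<in>J. Ps ! i) \<inter> Ps ! 0 = {}" by blast
  obtain m where m: "m \<in> J" using J by blast
  have "m \<noteq> 0" using m J(2) by metis
  hence m1: "1 \<le> m" "m < length Ps" using J m by auto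
  show "T_strong T (\<Union>i\<in>J. Ps ! i)" by (rule strong_mono[of "Ps ! m"]) (use petal m1 m in auto)
  show "T_strong T ((\<Union>i\<in>J. Ps ! i) - X)"
    by (rule strong_mono[OF strongPX[OF m1]]) (use m in auto)
qed

lemma lemH:
  assumes J: "J \<subseteq> {..<length Ps}" "0 \<notin> J" and l: "lam ((\<Union>i\<in>J. Ps ! i) - X) \<le> k"
  shows "lam (\<Union>i\<in>J. Ps ! i) \<le> k"
proof -
  let ?U = "(\<Union>i\<in>J. Ps ! i)"
  have UE: "?U \<subseteq> E" using J petalE by blast
  have fin: "finite J" using J finite_subset by blast
  have "K \<subseteq> J \<Longrightarrow> lam ((?U - X) \<union> (\<Union>i\<in>K. Ps ! i)) \<le> k" if "finite K" for K
    using that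
  proof (induction K rule: finite_induct)
    case empty thus ?case using l by simp
  next
    case (insert m K)
    let ?W = "(?U - X) \<union> (\<Union>i\<in>K. Ps ! i)"
    have mJ0: "m \<in> J" using insert.prems by auto
    have "m \<noteq> 0" using mJ0 J(2) by metis
    hence mJ: "m \<in> J" "1 \<le> m" "m < length Ps" using mJ0 J by auto
    have lW: "lam ?W \<le> k" using insert by auto
    have WE: "?W \<subseteq> E" using UE insert.prems J petalE by blast
    have mE: "Ps ! m \<subseteq> E" "lam (Ps ! m) \<le> k" using petal mJ by auto
    have "k \<le> lam (?W \<inter> Ps ! m)"
    proof (rule strong_ge)
      show "?W \<inter> Ps ! m \<subseteq> E" using WE by blast
      show "T_strong T (?W \<inter> Ps ! m)" by (rule strong_mono[OF strongPX[OF mJ(2,3)]]) (use mJ in auto)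
      show "T_strong T (E - (?W \<inter> Ps ! m))"
        by (rule strong_mono[OF P0sub(2)]) (use P0sub disj[of m 0] mJ Psne in auto)
    qed
    moreover have "lam (?W \<union> Ps ! m) + lam (?W \<inter> Ps ! m) \<le> lam ?W + lam (Ps ! m)"
      using subm WE mE by blast
    moreover have "(?U - X) \<union> (\<Union>i\<in>insert m K. Ps ! i) = ?W \<union> Ps ! m" by auto
    ultimately show ?case using lW mE by simp
  qed
  from this[OF fin] have "lam ((?U - X) \<union> ?U) \<le> k" by simp
  moreover have "(?U - X) \<union> ?U = ?U" by auto
  ultimately show ?thesis by simp
qed

lemma lemM:
  assumes J: "J \<subseteq> {..<length Ps}" "0 \<notin> J" "J \<noteq> {}"
    and l: "lam (\<Union>i\<in>J. Ps ! i) \<le> k \<or> lam ((\<Union>i\<in>J. Ps ! i) - X) \<le> k"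
  shows "T_equiv_sep E lam k T (\<Union>i\<in>J. Ps ! i) ((\<Union>i\<in>J. Ps ! i) - X)
       \<and> T_equiv_sep E lam k T ((\<Union>i\<in>J. Ps ! i) - X) (\<Union>i\<in>J. Ps ! i)"
proof -
  let ?U = "(\<Union>i\<in>J. Ps ! i)"
  note f = UJ_facts[OF J]
  have lU: "lam ?U \<le> k" using l lemH[OF J(1,2)] by blast
  have lUX: "lam (?U - X) \<le> k" using l lemL[OF f(1) _ f(2) f(3)] by blast
  have c1: "T_strong T (E - ?U)" by (rule strong_mono[OF P0sub(2)]) (use f P0sub in auto)
  have c2: "T_strong T (E - (?U - X))" by (rule strong_mono[OF P0sub(2)]) (use f P0sub in auto)
  have s1: "strong_ksep E lam k T ?U" unfolding strong_ksep_def k_separating_def using f lU c1 by auto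
  have s2: "strong_ksep E lam k T (?U - X)" unfolding strong_ksep_def k_separating_def using f lUX c2 by auto
  have e1: "fcl E lam k T ?U = fcl E lam k T (?U - X)"
  proof (rule fcl_eq)
    fix Z assume fc: "fully_closed E lam k T Z"
    show "?U \<subseteq> Z \<longleftrightarrow> ?U - X \<subseteq> Z"
    proof
      assume a: "?U - X \<subseteq> Z"
      show "?U \<subseteq> Z"
      proof (rule FCmain[OF fc f(1) lU])
        show "T_strong T (Z \<inter> ?U)" by (rule strong_mono[OF f(4)]) (use a in auto)
        show "T_weak T (?U - Z)" by (rule weak_mono[OF Xw]) (use a in auto)
      qed
    qed auto
  qed
  have e2: "fcl E lam k T (E - ?U) = fcl E lam k T (E - (?U - X))"
  proof (rule fcl_eq)
    fix Z assume fc: "fully_closed E lam k T Z"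
    have eq: "E - (?U - X) = (E - ?U) \<union> X" using XsubE by auto
    show "E - ?U \<subseteq> Z \<longleftrightarrow> E - (?U - X) \<subseteq> Z"
    proof
      assume a: "E - ?U \<subseteq> Z"
      have "?U - X \<subseteq> E" using f by auto
      hence "lam (E - (?U - X)) \<le> k" using symm[of "?U - X"] lUX by simp
      show "E - (?U - X) \<subseteq> Z"
      proof (rule FCmain[OF fc _ \<open>lam (E - (?U - X)) \<le> k\<close>])
        show "E - (?U - X) \<subseteq> E" by auto
        show "T_strong T (Z \<inter> (E - (?U - X)))" by (rule strong_mono[OF c1]) (use a in auto)
        show "T_weak T (E - (?U - X) - Z)" by (rule weak_mono[OF Xw]) (use a eq in auto)
      qed
    qed auto
  qed
  show ?thesis unfolding T_equiv_sep_def using s1 s2 e1 e2 by auto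
qed

lemma sk_compl: "strong_ksep E lam k T A \<Longrightarrow> strong_ksep E lam k T (E - A)"
proof -
  assume a: "strong_ksep E lam k T A"
  hence AE: "A \<subseteq> E" unfolding strong_ksep_def k_separating_def by blast
  have dA: "E - (E - A) = A" using AE by auto
  have "lam (E - A) = lam A" using symm[OF AE] by simp
  thus ?thesis using a dA unfolding strong_ksep_def k_separating_def by auto
qed

lemma equiv_compl:
  assumes "T_equiv_sep E lam k T A B"
  shows "T_equiv_sep E lam k T (E - A) (E - B)"
proof -
  have sA: "strong_ksep E lam k T A" and sB: "strong_ksep E lam k T B"
    and q: "{fcl E lam k T A, fcl E lam k T (E - A)} = {fcl E lam k T B, fcl E lam k T (E - B)}"
    using assms unfolding T_equiv_sep_def by auto
  have AE: "A \<subseteq> E" and BE: "B \<subseteq> E" using sA sB unfolding strong_ksep_def k_separating_def by auto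
  have dA: "E - (E - A) = A" and dB: "E - (E - B) = B" using AE BE by auto
  have "{fcl E lam k T (E - A), fcl E lam k T (E - (E - A))} = {fcl E lam k T (E - B), fcl E lam k T (E - (E - B))}"
    using q dA dB by (simp add: insert_commute)
  thus ?thesis unfolding T_equiv_sep_def using sk_compl[OF sA] sk_compl[OF sB] by simp
qed

lemma tc1: "A \<in> S \<Longrightarrow> T_strong T (E - A) \<and> k_separating E lam k A"
  using tc unfolding tree_compatible_def by blast

lemma tc2: "strong_ksep E lam k T A \<Longrightarrow> kS_sep E lam k S B \<Longrightarrow> T_equiv_sep E lam k T A B \<Longrightarrow> kS_sep E lam k S A"
  using tc unfolding tree_compatible_def by blast

lemma kS_strong: "kS_sep E lam k S A \<Longrightarrow> strong_ksep E lam k T A"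
proof -
  assume a: "kS_sep E lam k S A"
  hence AE: "A \<subseteq> E" and A1: "A \<in> S" and A2: "E - A \<in> S" unfolding kS_sep_def k_separating_def by auto
  have "T_strong T (E - A)" using tc1[OF A1] by blast
  moreover have "T_strong T (E - (E - A))" using tc1[OF A2] by blast
  moreover have "E - (E - A) = A" using AE by auto
  ultimately show ?thesis using a unfolding strong_ksep_def kS_sep_def by auto
qed

lemma S1: "T_equiv_sep E lam k T A B \<Longrightarrow> kS_sep E lam k S B \<Longrightarrow> kS_sep E lam k S A"
  by (rule tc2) (auto simp: T_equiv_sep_def)

end



context L46 begin

lemma le_QP: "flower_le_S E lam k T S Qs Ps"
  unfolding flower_le_S_def
proof (intro allI impI)
  fix A assume kA: "kS_sep E lam k S A" and dA: "displays Qs A"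
  obtain I where I: "I \<subseteq> {..<length Ps}" and AI: "A = (\<Union>i\<in>I. Qs ! i)"
    using dA Qlen unfolding displays_def by auto
  have sA: "strong_ksep E lam k T A" using kS_strong kA by blast
  hence AE: "A \<subseteq> E" and lA: "lam A \<le> k" and stA: "T_strong T A" and stcA: "T_strong T (E - A)"
    unfolding strong_ksep_def k_separating_def by auto
  show "\<exists>Y. kS_sep E lam k S Y \<and> displays Ps Y \<and> T_equiv_sep E lam k T A Y"
  proof (cases "0 \<in> I")
    case False
    let ?U = "\<Union>i\<in>I. Ps ! i"
    have AU: "A = ?U - X" using QunionJ[OF I False] AI by simp
    have ne: "I \<noteq> {}" using strong_ne[OF stA] AI by auto
    have "lam (?U - X) \<le> k" using lA AU by simp
    hence eq: "T_equiv_sep E lam k T ?U (?U - X) \<and> T_equiv_sep E lam k T (?U - X) ?U"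
      using lemM[OF I False ne] by blast
    have e1: "T_equiv_sep E lam k T A ?U" and e2: "T_equiv_sep E lam k T ?U A" using eq AU by simp_all
    have "kS_sep E lam k S ?U" using S1[OF e2 kA] .
    moreover have "displays Ps ?U" unfolding displays_def using I by blast
    ultimately show ?thesis using e1 by blast
  next
    case True
    let ?J = "{..<length Ps} - I"
    let ?U = "\<Union>i\<in>?J. Ps ! i"
    have J: "?J \<subseteq> {..<length Ps}" "0 \<notin> ?J" using True by auto
    have EA: "E - A = ?U - X" using Qcompl[OF I] AI QunionJ[OF J] by simp
    have ne: "?J \<noteq> {}"
    proof
      assume j0: "?J = {}"
      have "E - A = {}" using EA unfolding j0 by simp
      thus False using strong_ne[OF stcA] by simp
    qed
    have "lam (E - A) \<le> k" using lA symm[OF AE] by simp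
    hence "lam (?U - X) \<le> k" using EA by simp
    hence eq: "T_equiv_sep E lam k T ?U (?U - X) \<and> T_equiv_sep E lam k T (?U - X) ?U"
      using lemM[OF J ne] by blast
    have dd: "E - (E - A) = A" using AE by auto
    have Y: "E - ?U = (\<Union>i\<in>I. Ps ! i)"
    proof -
      have "E - ?U = (\<Union>i\<in>{..<length Ps} - ?J. Ps ! i)" using Pcompl[OF J(1)] .
      moreover have "{..<length Ps} - ?J = I" using I by auto
      ultimately show ?thesis by simp
    qed
    have e1: "T_equiv_sep E lam k T A (E - ?U)" using equiv_compl[of "?U - X" ?U] eq EA dd by simp
    have e2: "T_equiv_sep E lam k T (E - ?U) A" using equiv_compl[of ?U "?U - X"] eq EA dd by simp
    have "kS_sep E lam k S (E - ?U)" using S1[OF e2 kA] .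
    moreover have "displays Ps (E - ?U)" unfolding displays_def using I Y by blast
    ultimately show ?thesis using e1 by blast
  qed
qed

lemma le_PQ: "flower_le_S E lam k T S Ps Qs"
  unfolding flower_le_S_def
proof (intro allI impI)
  fix A assume kA: "kS_sep E lam k S A" and dA: "displays Ps A"
  obtain I where I: "I \<subseteq> {..<length Ps}" and AI: "A = (\<Union>i\<in>I. Ps ! i)"
    using dA unfolding displays_def by auto
  have sA: "strong_ksep E lam k T A" using kS_strong kA by blast
  hence AE: "A \<subseteq> E" and lA: "lam A \<le> k" and stA: "T_strong T A" and stcA: "T_strong T (E - A)"
    unfolding strong_ksep_def k_separating_def by auto
  show "\<exists>Y. kS_sep E lam k S Y \<and> displays Qs Y \<and> T_equiv_sep E lam k T A Y"
  proof (cases "0 \<in> I")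
    case False
    let ?U = "\<Union>i\<in>I. Ps ! i"
    have ne: "I \<noteq> {}" using strong_ne[OF stA] AI by auto
    have "lam ?U \<le> k" using lA AI by simp
    hence eq: "T_equiv_sep E lam k T ?U (?U - X) \<and> T_equiv_sep E lam k T (?U - X) ?U"
      using lemM[OF I False ne] by blast
    have e1: "T_equiv_sep E lam k T A (?U - X)" and e2: "T_equiv_sep E lam k T (?U - X) A"
      using eq AI by simp_all
    have "kS_sep E lam k S (?U - X)" using S1[OF e2 kA] .
    moreover have "displays Qs (?U - X)" unfolding displays_def
      using I QunionJ[OF I False] Qlen by (intro exI[of _ I]) simp
    ultimately show ?thesis using e1 by blast
  next
    case True
    let ?J = "{..<length Ps} - I"
    let ?U = "\<Union>i\<in>?J. Ps ! i"
    have J: "?J \<subseteq> {..<length Ps}" "0 \<notin> ?J" using True by auto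
    have EA: "E - A = ?U" using Pcompl[OF I] AI by simp
    have ne: "?J \<noteq> {}"
    proof
      assume j0: "?J = {}"
      have "E - A = {}" using EA unfolding j0 by simp
      thus False using strong_ne[OF stcA] by simp
    qed
    have "lam (E - A) \<le> k" using lA symm[OF AE] by simp
    hence "lam ?U \<le> k" using EA by simp
    hence eq: "T_equiv_sep E lam k T ?U (?U - X) \<and> T_equiv_sep E lam k T (?U - X) ?U"
      using lemM[OF J ne] by blast
    have dd: "E - (E - A) = A" using AE by auto
    have Y: "E - (?U - X) = (\<Union>i\<in>I. Qs ! i)"
    proof -
      have "E - (?U - X) = E - (\<Union>i\<in>?J. Qs ! i)" using QunionJ[OF J] by simp
      also have "\<dots> = (\<Union>i\<in>{..<length Ps} - ?J. Qs ! i)" using Qcompl[OF J(1)] .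
      also have "{..<length Ps} - ?J = I" using I by auto
      finally show ?thesis .
    qed
    have e1: "T_equiv_sep E lam k T A (E - (?U - X))" using equiv_compl[of ?U "?U - X"] eq EA dd by simp
    have e2: "T_equiv_sep E lam k T (E - (?U - X)) A" using equiv_compl[of "?U - X" ?U] eq EA dd by simp
    have "kS_sep E lam k S (E - (?U - X))" using S1[OF e2 kA] .
    moreover have "displays Qs (E - (?U - X))" unfolding displays_def
      using I Y Qlen by (intro exI[of _ I]) simp
    ultimately show ?thesis using e1 by blast
  qed
qed

end

lemma kS_strong_gen:
  assumes tc: "tree_compatible E lam k T S" and a: "kS_sep E lam k S A"
  shows "strong_ksep E lam k T A"
proof -
  have AE: "A \<subseteq> E" and A1: "A \<in> S" and A2: "E - A \<in> S" using a unfolding kS_sep_def k_separating_def by auto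
  have "T_strong T (E - A)" using tc A1 unfolding tree_compatible_def by blast
  moreover have "T_strong T (E - (E - A))" using tc A2 unfolding tree_compatible_def by blast
  moreover have "E - (E - A) = A" using AE by auto
  ultimately show ?thesis using a unfolding strong_ksep_def kS_sep_def by auto
qed

theorem lemma4p6:
  fixes E :: "'a set" and lam :: "'a set \<Rightarrow> int" and k :: int
    and T S :: "'a set set" and Ps :: "'a set list" and X :: "'a set"
  assumes "connectivity_system E lam"
    and "tangle E lam k T"
    and "tree_compatible E lam k T S"
    and "k_flower E lam k T Ps"
    and "S_order E lam k T S Ps \<ge> 2"
    and "\<forall>i<length Ps. \<not> T_loose E lam k T Ps i"
    and "X \<subseteq> E - Ps ! 0" and "X \<noteq> {}" and "T_weak T X"
    and "k_separating E lam k (Ps ! 0 \<union> X)"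
  shows "k_flower E lam k T ((Ps ! 0 \<union> X) # map (\<lambda>P. P - X) (tl Ps))
       \<and> flower_equiv_S E lam k T S ((Ps ! 0 \<union> X) # map (\<lambda>P. P - X) (tl Ps)) Ps
       \<and> fcl E lam k T (Ps ! 0) = fcl E lam k T (Ps ! 0 \<union> X)
       \<and> (\<forall>i. 1 \<le> i \<and> i < length Ps \<longrightarrow> fcl E lam k T (Ps ! i - X) = fcl E lam k T (Ps ! i))"
proof -
  have refl: "flower_le_S E lam k T S Ps Ps"
    unfolding flower_le_S_def T_equiv_sep_def using kS_strong_gen[OF assms(3)] by blast
  have "S_order E lam k T S Ps \<le> length Ps"
    unfolding S_order_def
    by (rule Least_le) (use assms(4) refl in \<open>auto simp: flower_equiv_S_def\<close>)
  hence n2: "2 \<le> length Ps" using assms(5) by simp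
  interpret L46 E lam k T S Ps X using assms n2 by unfold_locales auto
  show ?thesis
    using Qflower le_QP le_PQ fclP0X fclPX unfolding Qs_def flower_equiv_S_def by auto
qed


end
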